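(* Let $T\ge1$, $n\ge 2$, $\mu\in\mathbb{R}$, $\sigma>0$, $z^*\in\mathbb{R}$, $\tau\in\{1,\dots,T\}$. Data consist of batches $D_1,\dots,D_T$ of $n$ real numbers $X_{t,1},\dots,X_{t,n}$. Under $\mathbf{H_0}$ all $nT$ numbers are i.i.d. $\mathcal{N}(\mu,\sigma^2)$; under $\mathbf{H_1^\tau}$ they are generated the same way and then the $J$-th entry of $D_\tau$ is replaced by $z^*$, with $J$ uniform on $\{1,\dots,n\}$ independent of the data. The observations are $\hat\mu_t=\frac{1}{nt}\sum_{j=1}^t\sum_{k=1}^nX_{j,k}$, $t=1,\dots,T$, and $\bar X_\tau=\frac1n\sum_{k=1}^nX_{\tau,k}=\tau\hat\mu_\tau-(\tau-1)\hat\mu_{\tau-1}$ (with $\hat\mu_0:=0$). Then the log of the ratio of the joint density of $(\hat\mu_1,\dots,\hat\mu_T)$ under $\mathbf{H_1^\tau}$ to that under $\mathbf{H_0}$ is \[ \log\mathrm{LR}_\tau=-\frac12\log\Big(\frac{n-1}{n}\Big)-\frac{n}{2(n-1)\sigma^2}(\bar X_\tau-\mu)^2+\frac{(z^*-\mu)n}{(n-1)\sigma^2}(\bar X_\tau-\mu)-\frac{(z^*-\mu)^2}{2(n-1)\sigma^2}. \] *)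

theory Defs
  imports "HOL-Probability.Probability"
begin

text \<open>Index set of the data: batch t in {1..T}, entry k in {1..n}.
  A data set is a function X :: nat \<times> nat \<Rightarrow> real (extensional on the index set).\<close>

definition data_idx :: "nat \<Rightarrow> nat \<Rightarrow> (nat \<times> nat) set" where
  "data_idx T n = {1..T} \<times> {1..n}"

definition data_space :: "nat \<Rightarrow> nat \<Rightarrow> (nat \<times> nat \<Rightarrow> real) measure" where
  "data_space T n = PiM (data_idx T n) (\<lambda>_. lborel)"

definition H0 :: "real \<Rightarrow> real \<Rightarrow> nat \<Rightarrow> nat \<Rightarrow> (nat \<times> nat \<Rightarrow> real) measure" where
  "H0 \<mu> \<sigma> T n = PiM (data_idx T n) (\<lambda>_. density lborel (normal_density \<mu> \<sigma>))"

definition H1 :: "real \<Rightarrow> real \<Rightarrow> nat \<Rightarrow> nat \<Rightarrow> nat \<Rightarrow> real \<Rightarrow> (nat \<times> nat \<Rightarrow> real) measure" where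
  "H1 \<mu> \<sigma> T n \<tau> zs =
     distr (H0 \<mu> \<sigma> T n \<Otimes>\<^sub>M uniform_count_measure {1..n}) (data_space T n)
       (\<lambda>(X, j). X((\<tau>, j) := zs))"

definition muhat :: "nat \<Rightarrow> (nat \<times> nat \<Rightarrow> real) \<Rightarrow> nat \<Rightarrow> real" where
  "muhat n X t = (\<Sum>j\<in>{1..t}. \<Sum>k\<in>{1..n}. X (j, k)) / (real n * real t)"

definition obs_space :: "nat \<Rightarrow> (nat \<Rightarrow> real) measure" where
  "obs_space T = PiM {1..T} (\<lambda>_. lborel)"

definition obs :: "nat \<Rightarrow> nat \<Rightarrow> (nat \<times> nat \<Rightarrow> real) \<Rightarrow> (nat \<Rightarrow> real)" where
  "obs T n X = (\<lambda>t\<in>{1..T}. muhat n X t)"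

definition xbar :: "nat \<Rightarrow> (nat \<Rightarrow> real) \<Rightarrow> real" where
  "xbar \<tau> m = real \<tau> * m \<tau> - (real \<tau> - 1) * (if \<tau> = 1 then 0 else m (\<tau> - 1))"

definition logLR :: "real \<Rightarrow> real \<Rightarrow> nat \<Rightarrow> real \<Rightarrow> real \<Rightarrow> real" where
  "logLR \<mu> \<sigma> n zs xb =
     - (1/2) * ln ((real n - 1) / real n)
     - real n / (2 * (real n - 1) * \<sigma>\<^sup>2) * (xb - \<mu>)\<^sup>2
     + (zs - \<mu>) * real n / ((real n - 1) * \<sigma>\<^sup>2) * (xb - \<mu>)
     - (zs - \<mu>)\<^sup>2 / (2 * (real n - 1) * \<sigma>\<^sup>2)"

end

theory Submission
  imports Defs
begin

lemma comp_borel: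
  assumes "i \<in> I" "\<And>i. i \<in> I \<Longrightarrow> sets (M i) = sets borel"
  shows "(\<lambda>x. x i) \<in> borel_measurable (PiM I M)"
proof -
  have "(\<lambda>x. x i) \<in> measurable (PiM I M) (M i)" by (rule measurable_component_singleton) (rule assms(1))
  then show ?thesis using measurable_cong_sets[OF refl assms(2)[OF assms(1)], of "PiM I M"] by simp
qed

lemma (in prob_space) indep_vars_sets_cong:
  assumes "indep_vars M' X I" "\<And>i. i \<in> I \<Longrightarrow> sets (N' i) = sets (M' i)"
  shows "indep_vars N' X I"
proof -
  have m: "measurable M (N' i) = measurable M (M' i)" if "i \<in> I" for i
    by (rule measurable_cong_sets[OF refl assms(2)[OF that]])
  have r: "(\<forall>i\<in>I. random_variable (N' i) (X i)) \<longleftrightarrow> (\<forall>i\<in>I. random_variable (M' i) (X i))"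
    using m by blast
  have s: "indep_sets (\<lambda>i. {X i -` A \<inter> space M | A. A \<in> sets (N' i)}) I \<longleftrightarrow> indep_sets (\<lambda>i. {X i -` A \<inter> space M | A. A \<in> sets (M' i)}) I"
    by (rule indep_sets_cong[OF refl]) (simp only: assms(2))
  show ?thesis using assms(1) unfolding indep_vars_def2 using r s by blast
qed

lemma coord_indep:
  assumes "\<And>i. prob_space (M i)" "I \<noteq> {}"
  shows "prob_space.indep_vars (PiM I M) M (\<lambda>i x. x i) I"
proof -
  interpret product_prob_space M I using assms(1) by (simp add: product_prob_space_def product_prob_space_axioms_def product_sigma_finite_def prob_space_imp_sigma_finite)
  interpret P: prob_space "PiM I M" by (rule prob_space_PiM) (use assms in auto)
  define M' where "M' i = (if i \<in> I then M i else count_space UNIV)" for i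
  have "P.indep_vars M' (\<lambda>i x. x i) I"
  proof (subst P.indep_vars_iff_distr_eq_PiM[OF assms(2)])
    show "random_variable (M' i) (\<lambda>x. x i)" for i
    proof (cases "i \<in> I")
      case False
      have "(\<lambda>x. x i) \<in> measurable (PiM I M) (count_space UNIV)"
        by (rule measurable_cong[where g="\<lambda>_. undefined", THEN iffD2]) (use False in \<open>auto simp: space_PiM PiE_def extensional_def\<close>)
      then show ?thesis using False by (simp add: M'_def)
    qed (simp add: M'_def)
    have "distr (Pi\<^sub>M I M) (Pi\<^sub>M I M') (\<lambda>x. \<lambda>i\<in>I. x i) = distr (Pi\<^sub>M I M) (Pi\<^sub>M I M) (\<lambda>x. x)"
      by (intro distr_cong) (auto simp: space_PiM M'_def intro!: sets_PiM_cong)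
    also have "\<dots> = PiM I M" by simp
    also have "\<dots> = (\<Pi>\<^sub>M i\<in>I. distr (Pi\<^sub>M I M) (M' i) (\<lambda>x. x i))"
      by (intro PiM_cong refl) (simp add: PiM_component M'_def)
    finally show "distr (Pi\<^sub>M I M) (Pi\<^sub>M I M') (\<lambda>x. \<lambda>i\<in>I. x i) = (\<Pi>\<^sub>M i\<in>I. distr (Pi\<^sub>M I M) (M' i) (\<lambda>x. x i))" .
  qed
  then show ?thesis by (rule P.indep_vars_sets_cong) (simp add: M'_def)
qed

lemma block_normal:
  fixes I K :: "nat set" and Kt :: "nat \<Rightarrow> nat set" and a c :: "nat \<Rightarrow> real"
  assumes I: "finite I" "I \<noteq> {}" and Kt: "\<And>t. t \<in> I \<Longrightarrow> Kt t \<subseteq> K" "\<And>t. t \<in> I \<Longrightarrow> Kt t \<noteq> {}"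
    "\<And>t. t \<in> I \<Longrightarrow> finite (Kt t)"
    and c: "\<And>t. t \<in> I \<Longrightarrow> c t \<noteq> 0" and sig: "\<sigma> > 0"
  shows "distr (PiM (I \<times> K) (\<lambda>_. density lborel (normal_density \<mu> \<sigma>))) (PiM I (\<lambda>_. lborel))
           (\<lambda>X. \<lambda>t\<in>I. a t + c t * (\<Sum>k\<in>Kt t. X (t,k)))
       = PiM I (\<lambda>t. density lborel (normal_density (a t + c t * (real (card (Kt t)) * \<mu>))
                        (\<bar>c t\<bar> * (sqrt (real (card (Kt t))) * \<sigma>))))"
proof -
  define N0 where "N0 = density lborel (normal_density \<mu> \<sigma>)"
  have pN0: "prob_space N0" unfolding N0_def by (rule prob_space_normal_density) (use sig in auto)
  have sN0[simp]: "sets N0 = sets borel" unfolding N0_def by simp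
  define P where "P = PiM (I \<times> K) (\<lambda>_. N0)"
  interpret P: prob_space P unfolding P_def by (rule prob_space_PiM) (use pN0 in auto)
  have IK: "I \<times> K \<noteq> {}" using I Kt by blast
  have ind0: "P.indep_vars (\<lambda>_. N0) (\<lambda>i x. x i) (I \<times> K)"
    unfolding P_def by (rule coord_indep) (use pN0 IK in auto)
  have ind: "P.indep_vars (\<lambda>_. borel) (\<lambda>i x. x i) (I \<times> K)"
    by (rule P.indep_vars_sets_cong[OF ind0]) simp
  define Y where "Y t X = (if t \<in> I then a t + c t * (\<Sum>k\<in>Kt t. X (t,k)) else 0)" for t X
  define K' where "K' t = {t} \<times> Kt t" for t
  have indR: "P.indep_vars (\<lambda>t. PiM (K' t) (\<lambda>_. borel)) (\<lambda>t \<omega>. restrict (\<lambda>i. \<omega> i) (K' t)) I"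
    by (rule P.indep_vars_restrict[OF ind]) (use Kt in \<open>auto simp: K'_def disjoint_family_on_def\<close>)
  have indC: "P.indep_vars (\<lambda>_. borel) (\<lambda>t \<omega>. (\<lambda>r. a t + c t * (\<Sum>k\<in>Kt t. r (t,k))) (restrict (\<lambda>i. \<omega> i) (K' t))) I"
  proof (rule P.indep_vars_compose2[OF indR])
    fix t assume "t \<in> I"
    have "(\<lambda>r. r (t,k)) \<in> borel_measurable (PiM (K' t) (\<lambda>_. borel))" if "k \<in> Kt t" for k
      using that by (intro measurable_component_singleton) (auto simp: K'_def)
    then show "(\<lambda>r. a t + c t * (\<Sum>k\<in>Kt t. r (t,k))) \<in> borel_measurable (PiM (K' t) (\<lambda>_. borel))"
      by measurable
  qed
  have indY: "P.indep_vars (\<lambda>_. borel) Y I"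
    by (rule P.indep_vars_cong[THEN iffD1, OF refl _ _ indC]) (auto simp: Y_def K'_def)
  have indY': "P.indep_vars (\<lambda>_. lborel) Y I"
    by (rule P.indep_vars_sets_cong[OF indY]) simp
  have coordd: "distributed P lborel (\<lambda>x. x i) (normal_density \<mu> \<sigma>)" if "i \<in> I \<times> K" for i
  proof -
    have "distr P lborel (\<lambda>x. x i) = distr P N0 (\<lambda>x. x i)" by (rule distr_cong) auto
    also have "\<dots> = N0" unfolding P_def by (rule distr_PiM_component) (use pN0 that in auto)
    finally show ?thesis unfolding distributed_def N0_def
      using that by (auto simp: P_def N0_def intro!: measurable_component_singleton)
  qed
  have Yd: "distributed P lborel (Y t) (normal_density (a t + c t * (real (card (Kt t)) * \<mu>))
                        (\<bar>c t\<bar> * (sqrt (real (card (Kt t))) * \<sigma>)))" if t: "t \<in> I" for t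
  proof -
    have fin: "finite (K' t)" "K' t \<noteq> {}" using Kt t by (auto simp: K'_def)
    have s: "distributed P lborel (\<lambda>x. \<Sum>i\<in>K' t. x i) (normal_density (\<Sum>i\<in>K' t. \<mu>) (sqrt (\<Sum>i\<in>K' t. \<sigma>\<^sup>2)))"
    proof (rule P.sum_indep_normal[OF fin])
      have "K' t \<subseteq> I \<times> K" using Kt t by (auto simp: K'_def)
      then show "P.indep_vars (\<lambda>_. borel) (\<lambda>i x. x i) (K' t)" by (rule P.indep_vars_subset[OF ind])
      show "\<And>i. i \<in> K' t \<Longrightarrow> 0 < \<sigma>" using sig by simp
      show "\<And>i. i \<in> K' t \<Longrightarrow> distributed P lborel (\<lambda>x. x i) (\<lambda>x. ennreal (normal_density \<mu> \<sigma> x))"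
        using \<open>K' t \<subseteq> I \<times> K\<close> by (intro coordd) auto
    qed
    have cK: "card (K' t) = card (Kt t)" unfolding K'_def by (simp add: card_cartesian_product)
    have sumK: "(\<Sum>i\<in>K' t. x i) = (\<Sum>k\<in>Kt t. x (t,k))" for x :: "nat \<times> nat \<Rightarrow> real"
    proof -
      have "{t} \<times> Kt t = Pair t ` Kt t" by auto
      then show ?thesis unfolding K'_def by (simp add: sum.reindex inj_on_def)
    qed
    have pos: "0 < sqrt (real (card (Kt t)) * \<sigma>\<^sup>2)" using Kt(2,3)[OF t] sig by (auto simp: card_gt_0_iff)
    have s2: "distributed P lborel (\<lambda>x. \<Sum>k\<in>Kt t. x (t,k)) (normal_density (real (card (Kt t)) * \<mu>) (sqrt (real (card (Kt t)) * \<sigma>\<^sup>2)))"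
      using s by (simp add: sumK cK)
    have "distributed P lborel (\<lambda>x. a t + c t * (\<Sum>k\<in>Kt t. x (t,k))) (normal_density (a t + c t * (real (card (Kt t)) * \<mu>)) (\<bar>c t\<bar> * sqrt (real (card (Kt t)) * \<sigma>\<^sup>2)))"
      by (rule P.normal_density_affine[OF s2 pos c[OF t]])
    then show ?thesis using sig t by (simp add: Y_def[abs_def] real_sqrt_mult)
  qed
  have rvb: "Y t \<in> borel_measurable P" for t
  proof (cases "t \<in> I")
    case True
    have "(\<lambda>X. X (t,k)) \<in> borel_measurable P" if "k \<in> Kt t" for k
      unfolding P_def using that True Kt(1)[OF True] by (intro comp_borel) auto
    then have "(\<lambda>X. \<Sum>k\<in>Kt t. X (t,k)) \<in> borel_measurable P" by (rule borel_measurable_sum)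
    then show ?thesis using True unfolding Y_def by simp
  qed (simp add: Y_def[abs_def])
  have rv: "Y t \<in> measurable P lborel" for t
    using rvb[of t] measurable_cong_sets[OF refl sets_lborel, of P] by simp
  have eqY: "(\<lambda>x. \<lambda>t\<in>I. Y t x) = (\<lambda>X. \<lambda>t\<in>I. a t + c t * (\<Sum>k\<in>Kt t. X (t,k)))"
    by (auto simp: Y_def restrict_def fun_eq_iff)
  have "distr P (PiM I (\<lambda>_. lborel)) (\<lambda>x. \<lambda>t\<in>I. Y t x) = PiM I (\<lambda>t. distr P lborel (Y t))"
    by (rule P.indep_vars_iff_distr_eq_PiM[THEN iffD1, OF I(2) rv indY'])
  also have "\<dots> = PiM I (\<lambda>t. density lborel (normal_density (a t + c t * (real (card (Kt t)) * \<mu>))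
                        (\<bar>c t\<bar> * (sqrt (real (card (Kt t))) * \<sigma>))))"
    by (intro PiM_cong refl) (use Yd in \<open>auto simp: distributed_def\<close>)
  finally show ?thesis unfolding eqY P_def N0_def .
qed

lemma distr_pair_mixture:
  assumes sf: "sigma_finite_measure M" and U: "prob_space U" and F: "F \<in> measurable (M \<Otimes>\<^sub>M U) N"
    and eq: "\<And>j. j \<in> space U \<Longrightarrow> distr M N (\<lambda>x. F (x,j)) = Q" and sQ: "sets Q = sets N"
  shows "distr (M \<Otimes>\<^sub>M U) N F = Q"
proof (rule measure_eqI)
  interpret U: prob_space U by fact
  interpret pair_sigma_finite M U
    by (simp add: pair_sigma_finite_def sf U.sigma_finite_measure_axioms)
  show "sets (distr (M \<Otimes>\<^sub>M U) N F) = sets Q" using sQ by simp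
  fix A assume "A \<in> sets (distr (M \<Otimes>\<^sub>M U) N F)"
  then have A: "A \<in> sets N" by simp
  have "emeasure (distr (M \<Otimes>\<^sub>M U) N F) A = emeasure (M \<Otimes>\<^sub>M U) (F -` A \<inter> space (M \<Otimes>\<^sub>M U))"
    using A F by (simp add: emeasure_distr)
  also have "\<dots> = (\<integral>\<^sup>+y. emeasure M ((\<lambda>x. (x, y)) -` (F -` A \<inter> space (M \<Otimes>\<^sub>M U))) \<partial>U)"
    using A F by (intro emeasure_pair_measure_alt2) (rule measurable_sets)
  also have "\<dots> = (\<integral>\<^sup>+y. emeasure Q A \<partial>U)"
  proof (rule nn_integral_cong)
    fix y assume y: "y \<in> space U"
    have Fy: "(\<lambda>x. F (x, y)) \<in> measurable M N"
      using F y by measurable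
    have "(\<lambda>x. (x, y)) -` (F -` A \<inter> space (M \<Otimes>\<^sub>M U)) = (\<lambda>x. F (x,y)) -` A \<inter> space M"
      using y by (auto simp: space_pair_measure)
    then have "emeasure M ((\<lambda>x. (x, y)) -` (F -` A \<inter> space (M \<Otimes>\<^sub>M U))) = emeasure (distr M N (\<lambda>x. F (x,y))) A"
      using A Fy by (simp add: emeasure_distr)
    then show "emeasure M ((\<lambda>x. (x, y)) -` (F -` A \<inter> space (M \<Otimes>\<^sub>M U))) = emeasure Q A"
      using eq[OF y] by simp
  qed
  also have "\<dots> = emeasure Q A" by (simp add: U.emeasure_space_1)
  finally show "emeasure (distr (M \<Otimes>\<^sub>M U) N F) A = emeasure Q A" .
qed

lemma PiM_density_one:
  assumes I: "finite I" "\<tau> \<in> I" and N: "prob_space N" "prob_space (density N f)"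
    and f[measurable]: "f \<in> borel_measurable N"
  shows "PiM I (\<lambda>t. if t = \<tau> then density N f else N) = density (PiM I (\<lambda>_. N)) (\<lambda>b. f (b \<tau>))"
proof -
  define M where "M t = (if t = \<tau> then density N f else N)" for t
  interpret PM: product_sigma_finite M
    unfolding product_sigma_finite_def M_def using N by (auto intro: prob_space_imp_sigma_finite)
  interpret PN: product_sigma_finite "\<lambda>_. N"
    unfolding product_sigma_finite_def using N by (auto intro: prob_space_imp_sigma_finite)
  have sM[simp]: "sets (M i) = sets N" for i by (simp add: M_def)
  have "density (PiM I (\<lambda>_. N)) (\<lambda>b. f (b \<tau>)) = PiM I M"
  proof (rule PM.PiM_eqI[OF I(1)])
    show "sets (density (PiM I (\<lambda>_. N)) (\<lambda>b. f (b \<tau>))) = sets (PiM I M)"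
      by (simp cong: sets_PiM_cong)
    fix A assume A: "\<And>i. i \<in> I \<Longrightarrow> A i \<in> sets (M i)"
    define g where "g i x = (if i = \<tau> then f x else 1) * indicator (A i) x" for i x
    have PiA: "Pi\<^sub>E I A \<in> sets (PiM I (\<lambda>_. N))" using A I by (intro sets_PiM_I_finite) auto
    have "emeasure (density (PiM I (\<lambda>_. N)) (\<lambda>b. f (b \<tau>))) (Pi\<^sub>E I A)
        = (\<integral>\<^sup>+ b. f (b \<tau>) * indicator (Pi\<^sub>E I A) b \<partial>PiM I (\<lambda>_. N))"
    proof -
      have fm: "(\<lambda>b. f (b \<tau>)) \<in> borel_measurable (PiM I (\<lambda>_. N))"
      proof -
        have "(\<lambda>b. b \<tau>) \<in> measurable (PiM I (\<lambda>_. N)) N" by (rule measurable_component_singleton[OF I(2)])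
        then show ?thesis by (rule measurable_compose[OF _ f])
      qed
      show ?thesis using PiA fm by (simp add: emeasure_density nn_integral_set_ennreal)
    qed
    also have "\<dots> = (\<integral>\<^sup>+ b. (\<Prod>i\<in>I. g i (b i)) \<partial>PiM I (\<lambda>_. N))"
    proof (rule nn_integral_cong)
      fix b assume b: "b \<in> space (PiM I (\<lambda>_. N))"
      have "(\<Prod>i\<in>I. g i (b i)) = (\<Prod>i\<in>I. (if i = \<tau> then f (b i) else 1)) * (\<Prod>i\<in>I. indicator (A i) (b i))"
        unfolding g_def by (rule prod.distrib)
      also have "(\<Prod>i\<in>I. (if i = \<tau> then f (b i) else 1)) = f (b \<tau>)"
        using I by (simp add: prod.delta)
      also have "(\<Prod>i\<in>I. indicator (A i) (b i) :: ennreal) = indicator (Pi\<^sub>E I A) b"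
      proof (cases "b \<in> Pi\<^sub>E I A")
        case True then show ?thesis by (auto simp: indicator_def PiE_def intro!: prod.neutral)
      next
        case False
        then obtain i where "i \<in> I" "b i \<notin> A i" using b by (auto simp: space_PiM PiE_def)
        then show ?thesis using False I by (auto simp: indicator_def intro!: prod_zero)
      qed
      finally show "f (b \<tau>) * indicator (Pi\<^sub>E I A) b = (\<Prod>i\<in>I. g i (b i))" by simp
    qed
    also have "\<dots> = (\<Prod>i\<in>I. integral\<^sup>N N (g i))"
      using A I by (intro PN.product_nn_integral_prod) (auto simp: g_def)
    also have "\<dots> = (\<Prod>i\<in>I. emeasure (M i) (A i))"
    proof (rule prod.cong[OF refl])
      fix i assume i: "i \<in> I"
      show "integral\<^sup>N N (g i) = emeasure (M i) (A i)"
      proof (cases "i = \<tau>")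
        case True
        then show ?thesis using A[OF i] by (simp add: g_def[abs_def] M_def emeasure_density)
      next
        case False
        then show ?thesis using A[OF i] by (simp add: g_def[abs_def] M_def)
      qed
    qed
    finally show "emeasure (density (PiM I (\<lambda>_. N)) (\<lambda>b. f (b \<tau>))) (Pi\<^sub>E I A) = (\<Prod>i\<in>I. emeasure (M i) (A i))" .
  qed
  then show ?thesis by (simp add: M_def[abs_def])
qed

lemma normal_LR:
  fixes r \<sigma> \<mu> zs x :: real
  assumes r: "r \<ge> 2" and sig: "\<sigma> > 0"
  shows "normal_density \<mu> (\<bar>1/r\<bar> * (sqrt r * \<sigma>)) x *
           exp (- (1/2) * ln ((r - 1) / r)
     - r / (2 * (r - 1) * \<sigma>\<^sup>2) * (x - \<mu>)\<^sup>2
     + (zs - \<mu>) * r / ((r - 1) * \<sigma>\<^sup>2) * (x - \<mu>)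
     - (zs - \<mu>)\<^sup>2 / (2 * (r - 1) * \<sigma>\<^sup>2))
       = normal_density (zs/r + 1/r * ((r - 1) * \<mu>)) (\<bar>1/r\<bar> * (sqrt (r - 1) * \<sigma>)) x"
proof -
  define q where "q = (r - 1) / r"
  have q: "q > 0" using r by (simp add: q_def)
  define B where "B = - r / (2 * (r - 1) * \<sigma>\<^sup>2) * (x - \<mu>)\<^sup>2
     + (zs - \<mu>) * r / ((r - 1) * \<sigma>\<^sup>2) * (x - \<mu>)
     - (zs - \<mu>)\<^sup>2 / (2 * (r - 1) * \<sigma>\<^sup>2)"
  have e1: "exp (- (1/2) * ln q) = 1 / sqrt q"
  proof -
    have "- (1/2) * ln q = - ln (sqrt q)" using q by (simp add: ln_sqrt)
    then show ?thesis using q by (simp add: exp_minus inverse_eq_divide)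
  qed
  have L: "exp (- (1/2) * ln ((r - 1) / r)
     - r / (2 * (r - 1) * \<sigma>\<^sup>2) * (x - \<mu>)\<^sup>2
     + (zs - \<mu>) * r / ((r - 1) * \<sigma>\<^sup>2) * (x - \<mu>)
     - (zs - \<mu>)\<^sup>2 / (2 * (r - 1) * \<sigma>\<^sup>2)) = exp B / sqrt q"
  proof -
    have "- (1/2) * ln ((r - 1) / r)
     - r / (2 * (r - 1) * \<sigma>\<^sup>2) * (x - \<mu>)\<^sup>2
     + (zs - \<mu>) * r / ((r - 1) * \<sigma>\<^sup>2) * (x - \<mu>)
     - (zs - \<mu>)\<^sup>2 / (2 * (r - 1) * \<sigma>\<^sup>2) = - (1/2) * ln q + B"
      unfolding B_def q_def by (simp add: algebra_simps)
    then have "exp (- (1/2) * ln ((r - 1) / r)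
     - r / (2 * (r - 1) * \<sigma>\<^sup>2) * (x - \<mu>)\<^sup>2
     + (zs - \<mu>) * r / ((r - 1) * \<sigma>\<^sup>2) * (x - \<mu>)
     - (zs - \<mu>)\<^sup>2 / (2 * (r - 1) * \<sigma>\<^sup>2)) = exp (- (1/2) * ln q + B)" by (rule arg_cong[where f=exp])
    also have "\<dots> = exp (- (1/2) * ln q) * exp B" by (rule exp_add)
    also have "\<dots> = exp B / sqrt q" using e1 by simp
    finally show ?thesis .
  qed
  have s0: "(\<bar>1/r\<bar> * (sqrt r * \<sigma>))\<^sup>2 = \<sigma>\<^sup>2 / r" using r
    by (simp add: power_mult_distrib power_divide field_simps power2_eq_square)
  have s1: "(\<bar>1/r\<bar> * (sqrt (r - 1) * \<sigma>))\<^sup>2 = (r - 1) * \<sigma>\<^sup>2 / r\<^sup>2" using r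
    by (simp add: power_mult_distrib power_divide field_simps power2_eq_square)
  have sq: "sqrt (2 * pi * (\<sigma>\<^sup>2 / r)) * sqrt q = sqrt (2 * pi * ((r - 1) * \<sigma>\<^sup>2 / r\<^sup>2))"
  proof -
    have "2 * pi * (\<sigma>\<^sup>2 / r) * q = 2 * pi * ((r - 1) * \<sigma>\<^sup>2 / r\<^sup>2)"
      using r by (simp add: q_def field_simps power2_eq_square)
    then show ?thesis by (simp add: real_sqrt_mult[symmetric])
  qed
  have ex: "- (x - \<mu>)\<^sup>2 / (2 * (\<sigma>\<^sup>2 / r)) + B = - (x - (zs/r + 1/r * ((r - 1) * \<mu>)))\<^sup>2 / (2 * ((r - 1) * \<sigma>\<^sup>2 / r\<^sup>2))"
  proof -
    define u where "u = x - \<mu>"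
    define v where "v = zs - \<mu>"
    have d: "r - 1 \<noteq> 0" "r \<noteq> 0" "\<sigma> \<noteq> 0" using r sig by auto
    have m1: "x - (zs/r + 1/r * ((r - 1) * \<mu>)) = (r*u - v)/r"
      using d unfolding u_def v_def by (simp add: field_simps)
    have R: "- ((r*u - v)/r)\<^sup>2 / (2 * ((r - 1) * \<sigma>\<^sup>2 / r\<^sup>2)) = - (r*u - v)\<^sup>2 / (2 * (r - 1) * \<sigma>\<^sup>2)"
      using d by (simp add: power_divide field_simps)
    have L: "- u\<^sup>2 / (2 * (\<sigma>\<^sup>2 / r)) - r / (2 * (r - 1) * \<sigma>\<^sup>2) * u\<^sup>2
     + v * r / ((r - 1) * \<sigma>\<^sup>2) * u - v\<^sup>2 / (2 * (r - 1) * \<sigma>\<^sup>2)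
      = (- r*(r-1)*u\<^sup>2 - r * u\<^sup>2 + 2 * v * r * u - v\<^sup>2) / (2 * (r - 1) * \<sigma>\<^sup>2)"
    proof -
      define D where "D = 2 * (r - 1) * \<sigma>\<^sup>2"
      have D: "D \<noteq> 0" using d by (simp add: D_def)
      have 1: "- u\<^sup>2 / (2 * (\<sigma>\<^sup>2 / r)) = (- r*(r-1)*u\<^sup>2) / D"
        using d by (simp add: D_def field_simps)
      have 2: "r / (2 * (r - 1) * \<sigma>\<^sup>2) * u\<^sup>2 = (r * u\<^sup>2) / D"
        by (simp add: D_def)
      have 3: "v * r / ((r - 1) * \<sigma>\<^sup>2) * u = (2 * v * r * u) / D"
        using d by (simp add: D_def field_simps)
      show ?thesis unfolding D_def[symmetric] 1 2 3
        by (simp add: diff_divide_distrib add_divide_distrib)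
    qed
    have P: "- r*(r-1)*u\<^sup>2 - r * u\<^sup>2 + 2 * v * r * u - v\<^sup>2 = - (r*u - v)\<^sup>2"
      by (simp add: power2_eq_square algebra_simps)
    show ?thesis unfolding B_def m1 R u_def[symmetric] v_def[symmetric]
      using L P by simp
  qed
  have pos: "sqrt (2 * pi * (\<sigma>\<^sup>2 / r)) > 0" "sqrt q > 0" using r sig q by auto
  show ?thesis
    unfolding normal_density_def L s0 s1 sq[symmetric] ex[symmetric] exp_add
    using pos by (simp add: field_simps)
qed

definition gmap :: "nat \<Rightarrow> (nat \<Rightarrow> real) \<Rightarrow> (nat \<Rightarrow> real)" where
  "gmap T b = (\<lambda>t\<in>{1..T}. (\<Sum>j\<in>{1..t}. b j) / real t)"

lemma xbar_gmap:
  assumes "\<tau> \<in> {1..T}"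
  shows "xbar \<tau> (gmap T b) = b \<tau>"
proof (cases "\<tau> = 1")
  case True then show ?thesis using assms by (simp add: xbar_def gmap_def)
next
  case False
  then obtain m where m: "\<tau> = Suc m" "m \<ge> 1" using assms by (cases \<tau>) auto
  have "(\<Sum>j\<in>{1..Suc m}. b j) = (\<Sum>j\<in>{1..m}. b j) + b (Suc m)" by simp
  then show ?thesis using assms m by (simp add: xbar_def gmap_def)
qed

lemma gmap_meas: "gmap T \<in> measurable (PiM {1..T} (\<lambda>_. lborel)) (obs_space T)"
  unfolding gmap_def obs_space_def
proof (rule measurable_restrict)
  fix t assume t: "t \<in> {1..T}"
  have "(\<lambda>b. b j) \<in> borel_measurable (PiM {1..T} (\<lambda>_. lborel))" if "j \<in> {1..t}" for j
    using that t by (intro comp_borel) auto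
  then have h: "(\<lambda>b. \<Sum>j\<in>{1..t}. b j) \<in> borel_measurable (PiM {1..T} (\<lambda>_. lborel))"
    by (rule borel_measurable_sum)
  show "(\<lambda>b. (\<Sum>j\<in>{1..t}. b j) / real t) \<in> measurable (PiM {1..T} (\<lambda>_. lborel)) lborel"
    using borel_measurable_divide[OF h borel_measurable_const[of "real t"]] by simp
qed

lemma obs_gmap:
  assumes "n > 0"
  shows "obs T n X = gmap T (\<lambda>t\<in>{1..T}. 1 / real n * (\<Sum>k\<in>{1..n}. X (t, k)))"
  unfolding obs_def gmap_def muhat_def
proof (rule restrict_ext)
  fix t assume t: "t \<in> {1..T}"
  have "(\<Sum>j\<in>{1..t}. (\<lambda>t\<in>{1..T}. 1 / real n * (\<Sum>k\<in>{1..n}. X (t, k))) j)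
      = (\<Sum>j\<in>{1..t}. 1 / real n * (\<Sum>k\<in>{1..n}. X (j, k)))"
    using t by (intro sum.cong) auto
  also have "\<dots> = (\<Sum>j\<in>{1..t}. \<Sum>k\<in>{1..n}. X (j, k)) / real n"
    by (simp add: sum_divide_distrib)
  finally show "(\<Sum>j\<in>{1..t}. \<Sum>k\<in>{1..n}. X (j, k)) / (real n * real t) =
         (\<Sum>j\<in>{1..t}. (\<lambda>t\<in>{1..T}. 1 / real n * (\<Sum>k\<in>{1..n}. X (t, k))) j) / real t"
    by simp
qed

lemma obs_meas: "obs T n \<in> measurable (data_space T n) (obs_space T)"
  unfolding obs_def obs_space_def
proof (rule measurable_restrict)
  fix t assume t: "t \<in> {1..T}"
  have "(\<lambda>X. X (j,k)) \<in> borel_measurable (data_space T n)" if "j \<in> {1..t}" "k \<in> {1..n}" for j k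
    using that t unfolding data_space_def data_idx_def by (intro comp_borel) auto
  then have "(\<lambda>X. \<Sum>j\<in>{1..t}. \<Sum>k\<in>{1..n}. X (j,k)) \<in> borel_measurable (data_space T n)"
    by (intro borel_measurable_sum) auto
  then show "(\<lambda>X. muhat n X t) \<in> measurable (data_space T n) lborel"
    unfolding muhat_def by simp
qed

lemma blk_meas:
  fixes a c :: "nat \<Rightarrow> real" and M :: "nat \<times> nat \<Rightarrow> real measure"
  assumes Kt: "\<And>t. t \<in> I \<Longrightarrow> Kt t \<subseteq> K" and sM: "\<And>i. sets (M i) = sets borel"
  shows "(\<lambda>X. \<lambda>t\<in>I. a t + c t * (\<Sum>k\<in>Kt t. X (t,k))) \<in> measurable (PiM (I \<times> K) M) (PiM I (\<lambda>_. lborel))"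
proof (rule measurable_restrict)
  fix t assume t: "t \<in> I"
  have "(\<lambda>X. X (t,k)) \<in> borel_measurable (PiM (I \<times> K) M)" if "k \<in> Kt t" for k
    using that t Kt[OF t] sM by (intro comp_borel) auto
  then have h: "(\<lambda>X. \<Sum>k\<in>Kt t. X (t,k)) \<in> borel_measurable (PiM (I \<times> K) M)"
    by (rule borel_measurable_sum)
  show "(\<lambda>X. a t + c t * (\<Sum>k\<in>Kt t. X (t,k))) \<in> measurable (PiM (I \<times> K) M) lborel"
  proof -
    have "(\<lambda>X. a t + c t * (\<Sum>k\<in>Kt t. X (t,k))) \<in> borel_measurable (PiM (I \<times> K) M)"
      by (intro borel_measurable_add borel_measurable_times borel_measurable_const h)
    then show ?thesis by simp
  qed
qed

lemma upd_meas1: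
  assumes j: "(\<tau>, j) \<in> data_idx T n"
  shows "(\<lambda>X. X((\<tau>, j) := zs)) \<in> measurable (H0 \<mu> \<sigma> T n) (data_space T n)"
proof -
  have "(\<lambda>X i. (if i = (\<tau>, j) then zs else X i)) \<in> measurable (H0 \<mu> \<sigma> T n) (data_space T n)"
    unfolding data_space_def
  proof (rule measurable_PiM_single')
    fix i assume i: "i \<in> data_idx T n"
    show "(\<lambda>X. if i = (\<tau>, j) then zs else X i) \<in> measurable (H0 \<mu> \<sigma> T n) lborel"
    proof (cases "i = (\<tau>, j)")
      case False
      have "(\<lambda>X. X i) \<in> borel_measurable (H0 \<mu> \<sigma> T n)"
        unfolding H0_def using i by (intro comp_borel) auto
      then show ?thesis using False by simp
    qed simp
  next
    show "(\<lambda>X i. if i = (\<tau>, j) then zs else X i) \<in> space (H0 \<mu> \<sigma> T n) \<rightarrow> (\<Pi>\<^sub>E i\<in>data_idx T n. space lborel)"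
      using j by (auto simp: H0_def space_PiM PiE_def extensional_def)
  qed
  moreover have "(\<lambda>X. X((\<tau>, j) := zs)) = (\<lambda>X i. (if i = (\<tau>, j) then zs else X i))"
    by (auto simp: fun_eq_iff)
  ultimately show ?thesis by simp
qed

lemma upd_meas:
  assumes \<tau>: "\<tau> \<in> {1..T}"
  shows "(\<lambda>(X, j). X((\<tau>, j) := zs)) \<in> measurable (H0 \<mu> \<sigma> T n \<Otimes>\<^sub>M uniform_count_measure {1..n}) (data_space T n)"
proof -
  have snd: "snd \<in> measurable (H0 \<mu> \<sigma> T n \<Otimes>\<^sub>M uniform_count_measure {1..n}) (count_space {1..n})"
  proof -
    have "snd \<in> measurable (H0 \<mu> \<sigma> T n \<Otimes>\<^sub>M uniform_count_measure {1..n}) (uniform_count_measure {1..n})"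
      by (rule measurable_snd)
    then show ?thesis
      using measurable_cong_sets[OF refl sets_uniform_count_measure_count_space, of "H0 \<mu> \<sigma> T n \<Otimes>\<^sub>M uniform_count_measure {1..n}" "{1..n::nat}"]
      by simp
  qed
  have f: "(\<lambda>x. (fst x)((\<tau>, j) := zs)) \<in> measurable (H0 \<mu> \<sigma> T n \<Otimes>\<^sub>M uniform_count_measure {1..n}) (data_space T n)"
    if j: "j \<in> {1..n}" for j
  proof -
    have "(\<lambda>X. X((\<tau>, j) := zs)) \<in> measurable (H0 \<mu> \<sigma> T n) (data_space T n)"
      using \<tau> j by (intro upd_meas1) (auto simp: data_idx_def)
    then show ?thesis by (rule measurable_compose[OF measurable_fst])
  qed
  have "(\<lambda>x. (fst x)((\<tau>, snd x) := zs)) \<in> measurable (H0 \<mu> \<sigma> T n \<Otimes>\<^sub>M uniform_count_measure {1..n}) (data_space T n)"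
    by (rule measurable_compose_countable'[where f="\<lambda>j x. (fst x)((\<tau>, j) := zs)", OF f snd]) auto
  moreover have "(\<lambda>(X, j). X((\<tau>, j) := zs)) = (\<lambda>x. (fst x)((\<tau>, snd x) := zs))"
    by (auto simp: fun_eq_iff)
  ultimately show ?thesis by simp
qed

lemma xbar_meas:
  assumes "\<tau> \<in> {1..T}"
  shows "xbar \<tau> \<in> borel_measurable (obs_space T)"
proof (cases "\<tau> = 1")
  case True
  have "(\<lambda>m. m \<tau>) \<in> borel_measurable (obs_space T)"
    unfolding obs_space_def using assms by (intro comp_borel) auto
  then show ?thesis using True by (simp add: xbar_def[abs_def])
next
  case False
  have "(\<lambda>m. m \<tau>) \<in> borel_measurable (obs_space T)"
    unfolding obs_space_def using assms by (intro comp_borel) auto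
  moreover have "(\<lambda>m. m (\<tau> - 1)) \<in> borel_measurable (obs_space T)"
    unfolding obs_space_def using assms False by (intro comp_borel) auto
  ultimately show ?thesis using False by (simp add: xbar_def[abs_def])
qed

theorem theorem3p4:
  fixes T n \<tau> :: nat and \<mu> \<sigma> zs :: real
  assumes "T \<ge> 1" and "n \<ge> 2" and "\<sigma> > 0" and "\<tau> \<in> {1..T}"
  shows "distr (H1 \<mu> \<sigma> T n \<tau> zs) (obs_space T) (obs T n)
       = density (distr (H0 \<mu> \<sigma> T n) (obs_space T) (obs T n))
           (\<lambda>m. ennreal (exp (logLR \<mu> \<sigma> n zs (xbar \<tau> m))))"
proof -
  note T = assms(1) and n2 = assms(2) and sig = assms(3) and tau = assms(4)
  define I where "I = {1..T}"
  define K where "K = {1..n}"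
  have n0: "n > 0" "real n \<noteq> 0" using n2 by auto
  have fI: "finite I" "I \<noteq> {}" "\<tau> \<in> I" using T tau by (auto simp: I_def)
  have fK: "finite K" "K \<noteq> {}" using n2 by (auto simp: K_def)
  have cK: "card K = n" by (simp add: K_def)
  define N0 where "N0 = density lborel (normal_density \<mu> \<sigma>)"
  define N0s where "N0s = density lborel (normal_density \<mu> (\<bar>1 / real n\<bar> * (sqrt (real n) * \<sigma>)))"
  define N1s where "N1s = density lborel (normal_density (zs / real n + 1 / real n * ((real n - 1) * \<mu>))
                                 (\<bar>1 / real n\<bar> * (sqrt (real n - 1) * \<sigma>)))"
  define l where "l x = ennreal (exp (logLR \<mu> \<sigma> n zs x))" for x
  define M1 where "M1 t = (if t = \<tau> then N1s else N0s)" for t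
  define PN0 where "PN0 = PiM I (\<lambda>_. N0s)"
  define U where "U = uniform_count_measure K"
  have H0eq: "H0 \<mu> \<sigma> T n = PiM (I \<times> K) (\<lambda>_. N0)"
    by (simp add: H0_def data_idx_def I_def K_def N0_def)
  have sN0: "sets N0 = sets borel" by (simp add: N0_def)
  have pN0s: "prob_space N0s" unfolding N0s_def by (rule prob_space_normal_density) (use n2 sig in auto)
  have pN1s: "prob_space N1s" unfolding N1s_def by (rule prob_space_normal_density) (use n2 sig in auto)
  have pH0: "prob_space (H0 \<mu> \<sigma> T n)" unfolding H0_def
    by (rule prob_space_PiM) (use sig in \<open>simp add: prob_space_normal_density\<close>)
  have pU: "prob_space U" unfolding U_def using fK by (rule prob_space_uniform_count_measure)
  have obsSp: "obs_space T = PiM I (\<lambda>_. lborel)" by (simp add: obs_space_def I_def)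
  have gm: "gmap T \<in> measurable (PiM I (\<lambda>_. lborel)) (obs_space T)"
    unfolding I_def by (rule gmap_meas)

  have PB0: "distr (H0 \<mu> \<sigma> T n) (PiM I (\<lambda>_. lborel)) (\<lambda>X. \<lambda>t\<in>I. 0 + 1 / real n * (\<Sum>k\<in>K. X (t,k))) = PN0"
  proof -
    have "distr (PiM (I \<times> K) (\<lambda>_. density lborel (normal_density \<mu> \<sigma>))) (PiM I (\<lambda>_. lborel))
           (\<lambda>X. \<lambda>t\<in>I. 0 + 1 / real n * (\<Sum>k\<in>K. X (t,k)))
       = PiM I (\<lambda>t. density lborel (normal_density (0 + 1 / real n * (real (card K) * \<mu>))
                        (\<bar>1 / real n\<bar> * (sqrt (real (card K)) * \<sigma>))))"
      by (rule block_normal) (use fI fK n0 sig in auto)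
    moreover have "0 + 1 / real n * (real (card K) * \<mu>) = \<mu>" using n0 by (simp add: cK)
    ultimately show ?thesis by (simp add: H0eq N0_def PN0_def N0s_def cK)
  qed
  have B0m: "(\<lambda>X. \<lambda>t\<in>I. 0 + 1 / real n * (\<Sum>k\<in>K. X (t,k))) \<in> measurable (H0 \<mu> \<sigma> T n) (PiM I (\<lambda>_. lborel))"
    unfolding H0eq by (rule blk_meas) (auto simp: N0_def)
  have RH0: "distr (H0 \<mu> \<sigma> T n) (obs_space T) (obs T n) = distr PN0 (obs_space T) (gmap T)"
  proof -
    have "distr (H0 \<mu> \<sigma> T n) (obs_space T) (obs T n)
        = distr (H0 \<mu> \<sigma> T n) (obs_space T) (gmap T \<circ> (\<lambda>X. \<lambda>t\<in>I. 0 + 1 / real n * (\<Sum>k\<in>K. X (t,k))))"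
      by (rule distr_cong) (auto simp: obs_gmap[OF n0(1)] I_def K_def)
    also have "\<dots> = distr (distr (H0 \<mu> \<sigma> T n) (PiM I (\<lambda>_. lborel)) (\<lambda>X. \<lambda>t\<in>I. 0 + 1 / real n * (\<Sum>k\<in>K. X (t,k)))) (obs_space T) (gmap T)"
      by (rule distr_distr[symmetric, OF gm B0m])
    also have "\<dots> = distr PN0 (obs_space T) (gmap T)" by (simp only: PB0)
    finally show ?thesis .
  qed

  have RH1j: "distr (H0 \<mu> \<sigma> T n) (obs_space T) (\<lambda>X. obs T n (X((\<tau>, j) := zs))) = distr (PiM I M1) (obs_space T) (gmap T)"
    if j: "j \<in> K" for j
  proof -
    define Kt where "Kt t = (if t = \<tau> then K - {j} else K)" for t
    define a where "a t = (if t = \<tau> then zs / real n else 0)" for t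
    define Bj where "Bj X = (\<lambda>t\<in>I. a t + 1 / real n * (\<Sum>k\<in>Kt t. X (t,k)))" for X
    have cKj: "card (K - {j}) = n - 1" using j fK by (simp add: cK)
    have nK: "K - {j} \<noteq> {}"
    proof -
      have "card (K - {j}) \<noteq> 0" using cKj n2 by simp
      then show ?thesis by (metis card.empty)
    qed
    have "distr (PiM (I \<times> K) (\<lambda>_. density lborel (normal_density \<mu> \<sigma>))) (PiM I (\<lambda>_. lborel))
           (\<lambda>X. \<lambda>t\<in>I. a t + 1 / real n * (\<Sum>k\<in>Kt t. X (t,k)))
       = PiM I (\<lambda>t. density lborel (normal_density (a t + 1 / real n * (real (card (Kt t)) * \<mu>))
                        (\<bar>1 / real n\<bar> * (sqrt (real (card (Kt t))) * \<sigma>))))"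
      by (rule block_normal) (use fI fK n0 sig nK in \<open>auto simp: Kt_def\<close>)
    also have "\<dots> = PiM I M1"
    proof (rule PiM_cong[OF refl])
      fix t assume t: "t \<in> I"
      show "density lborel (normal_density (a t + 1 / real n * (real (card (Kt t)) * \<mu>))
                        (\<bar>1 / real n\<bar> * (sqrt (real (card (Kt t))) * \<sigma>))) = M1 t"
      proof (cases "t = \<tau>")
        case True
        have "real (n - 1) = real n - 1" using n0 by simp
        then show ?thesis using True by (simp add: Kt_def a_def M1_def N1s_def cKj)
      next
        case False
        have "1 / real n * (real n * \<mu>) = \<mu>" using n0 by simp
        then show ?thesis using False by (simp add: Kt_def a_def M1_def N0s_def cK)
      qed
    qed
    finally have PB1: "distr (H0 \<mu> \<sigma> T n) (PiM I (\<lambda>_. lborel)) Bj = PiM I M1"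
      by (simp add: H0eq N0_def Bj_def[abs_def])
    have Bjm: "Bj \<in> measurable (H0 \<mu> \<sigma> T n) (PiM I (\<lambda>_. lborel))"
      unfolding H0eq Bj_def[abs_def] by (rule blk_meas) (auto simp: N0_def Kt_def)
    have eqj: "obs T n (X((\<tau>, j) := zs)) = gmap T (Bj X)" for X
    proof -
      have "(\<lambda>t\<in>{1..T}. 1 / real n * (\<Sum>k\<in>{1..n}. (X((\<tau>, j) := zs)) (t, k))) = Bj X"
        unfolding Bj_def I_def[symmetric] K_def[symmetric]
      proof (rule restrict_ext)
        fix t assume t: "t \<in> I"
        show "1 / real n * (\<Sum>k\<in>K. (X((\<tau>, j) := zs)) (t, k)) = a t + 1 / real n * (\<Sum>k\<in>Kt t. X (t, k))"
        proof (cases "t = \<tau>")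
          case True
          have "(\<Sum>k\<in>K. (X((\<tau>, j) := zs)) (t, k)) = (X((\<tau>, j) := zs)) (t, j) + (\<Sum>k\<in>K - {j}. (X((\<tau>, j) := zs)) (t, k))"
            using j fK by (simp add: sum.remove)
          also have "(\<Sum>k\<in>K - {j}. (X((\<tau>, j) := zs)) (t, k)) = (\<Sum>k\<in>K - {j}. X (t, k))"
            by (rule sum.cong) auto
          finally show ?thesis using True n0 by (simp add: a_def Kt_def field_simps)
        next
          case False
          then show ?thesis by (simp add: a_def Kt_def)
        qed
      qed
      then show ?thesis by (simp add: obs_gmap[OF n0(1)])
    qed
    have "distr (H0 \<mu> \<sigma> T n) (obs_space T) (\<lambda>X. obs T n (X((\<tau>, j) := zs)))
        = distr (H0 \<mu> \<sigma> T n) (obs_space T) (gmap T \<circ> Bj)"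
      by (rule distr_cong) (auto simp: eqj)
    also have "\<dots> = distr (distr (H0 \<mu> \<sigma> T n) (PiM I (\<lambda>_. lborel)) Bj) (obs_space T) (gmap T)"
      by (rule distr_distr[symmetric, OF gm Bjm])
    also have "\<dots> = distr (PiM I M1) (obs_space T) (gmap T)" by (simp only: PB1)
    finally show ?thesis .
  qed

  have updm: "(\<lambda>(X, j). X((\<tau>, j) := zs)) \<in> measurable (H0 \<mu> \<sigma> T n \<Otimes>\<^sub>M U) (data_space T n)"
    unfolding U_def K_def using tau by (rule upd_meas)
  have obsm: "obs T n \<in> measurable (data_space T n) (obs_space T)" by (rule obs_meas)
  have LHS: "distr (H1 \<mu> \<sigma> T n \<tau> zs) (obs_space T) (obs T n) = distr (PiM I M1) (obs_space T) (gmap T)"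
  proof -
    have "distr (H1 \<mu> \<sigma> T n \<tau> zs) (obs_space T) (obs T n)
        = distr (H0 \<mu> \<sigma> T n \<Otimes>\<^sub>M U) (obs_space T) (obs T n \<circ> (\<lambda>(X, j). X((\<tau>, j) := zs)))"
      unfolding H1_def U_def[symmetric] K_def[symmetric] by (rule distr_distr[OF obsm updm])
    also have "\<dots> = distr (PiM I M1) (obs_space T) (gmap T)"
    proof (rule distr_pair_mixture)
      show "sigma_finite_measure (H0 \<mu> \<sigma> T n)" using pH0 by (rule prob_space_imp_sigma_finite)
      show "prob_space U" by (rule pU)
      show "obs T n \<circ> (\<lambda>(X, j). X((\<tau>, j) := zs)) \<in> measurable (H0 \<mu> \<sigma> T n \<Otimes>\<^sub>M U) (obs_space T)"
        by (rule measurable_comp[OF updm obsm])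
      show "sets (distr (PiM I M1) (obs_space T) (gmap T)) = sets (obs_space T)" by simp
      fix j assume "j \<in> space U"
      then have j: "j \<in> K" by (simp add: U_def space_uniform_count_measure)
      show "distr (H0 \<mu> \<sigma> T n) (obs_space T) (\<lambda>x. (obs T n \<circ> (\<lambda>(X, j). X((\<tau>, j) := zs))) (x, j))
          = distr (PiM I M1) (obs_space T) (gmap T)"
        using RH1j[OF j] by (simp add: comp_def)
    qed
    finally show ?thesis .
  qed

  have lm: "l \<in> borel_measurable borel"
    unfolding l_def[abs_def] logLR_def by measurable
  have N1eq: "N1s = density N0s l"
  proof -
    have "density N0s l = density lborel (\<lambda>x. ennreal (normal_density \<mu> (\<bar>1 / real n\<bar> * (sqrt (real n) * \<sigma>)) x) * l x)"
      unfolding N0s_def using lm by (intro density_density_eq) auto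
    also have "\<dots> = N1s"
      unfolding N1s_def
    proof (rule density_cong[OF _ _ AE_I2])
      show "(\<lambda>x. ennreal (normal_density \<mu> (\<bar>1 / real n\<bar> * (sqrt (real n) * \<sigma>)) x) * l x) \<in> borel_measurable lborel"
        using lm by simp
      show "(\<lambda>x. ennreal (normal_density (zs / real n + 1 / real n * ((real n - 1) * \<mu>)) (\<bar>1 / real n\<bar> * (sqrt (real n - 1) * \<sigma>)) x)) \<in> borel_measurable lborel"
        by (simp only: measurable_lborel2) measurable
      fix x
      have "normal_density \<mu> (\<bar>1 / real n\<bar> * (sqrt (real n) * \<sigma>)) x * exp (logLR \<mu> \<sigma> n zs x)
          = normal_density (zs / real n + 1 / real n * ((real n - 1) * \<mu>)) (\<bar>1 / real n\<bar> * (sqrt (real n - 1) * \<sigma>)) x"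
        unfolding logLR_def by (rule normal_LR) (use n2 sig in auto)
      then show "ennreal (normal_density \<mu> (\<bar>1 / real n\<bar> * (sqrt (real n) * \<sigma>)) x) * l x
          = ennreal (normal_density (zs / real n + 1 / real n * ((real n - 1) * \<mu>)) (\<bar>1 / real n\<bar> * (sqrt (real n - 1) * \<sigma>)) x)"
        by (simp add: l_def ennreal_mult[symmetric])
    qed
    finally show ?thesis ..
  qed
  have PM1: "PiM I M1 = density PN0 (\<lambda>b. l (b \<tau>))"
  proof -
    have "PiM I M1 = PiM I (\<lambda>t. if t = \<tau> then density N0s l else N0s)"
      unfolding M1_def[abs_def] N1eq[symmetric] ..
    also have "\<dots> = density PN0 (\<lambda>b. l (b \<tau>))"
      unfolding PN0_def
    proof (rule PiM_density_one[OF fI(1) fI(3) pN0s])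
      show "prob_space (density N0s l)" using pN1s N1eq by simp
      show "l \<in> borel_measurable N0s" using lm by (simp add: N0s_def)
    qed
    finally show ?thesis .
  qed
  have sPN0: "sets PN0 = sets (PiM I (\<lambda>_. lborel))"
    unfolding PN0_def by (rule sets_PiM_cong) (auto simp: N0s_def)
  have gm': "gmap T \<in> measurable PN0 (obs_space T)"
    using gm measurable_cong_sets[OF sPN0 refl, of "obs_space T"] by simp
  have lxm: "(\<lambda>m. l (xbar \<tau> m)) \<in> borel_measurable (obs_space T)"
    by (rule measurable_compose[OF xbar_meas[OF tau] lm])
  have "distr (PiM I M1) (obs_space T) (gmap T) = distr (density PN0 (\<lambda>b. l (xbar \<tau> (gmap T b)))) (obs_space T) (gmap T)"
    unfolding PM1 using xbar_gmap[OF tau] by simp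
  also have "\<dots> = density (distr PN0 (obs_space T) (gmap T)) (\<lambda>m. l (xbar \<tau> m))"
    by (rule density_distr[symmetric, OF lxm gm'])
  finally show ?thesis
    unfolding LHS RH0 l_def .
qed

end
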